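(* For all integers $0 \leq k \leq n$, \[ [2]_q^k\,[k]_{q^2}!\,S_B[n,k] \;=\; \sum_{\ell=0}^{k} q^{k(k-2\ell)}\,B_{n,\ell}(q)\,{n-\ell \brack k-\ell}_{q^2}. \]
   Context: For $k\ge 1$, $[k]_q=1+q+\dots+q^{k-1}$, $[0]_q=0$, $[n]_q!=[1]_q[2]_q\cdots[n]_q$ (with $[0]_q!=1$), and ${n\brack k}_q=\frac{[n]_q!}{[k]_q![n-k]_q!}$ for $0\le k\le n$; $[k]_{q^2}!$ and ${\cdot \brack \cdot}_{q^2}$ denote these with $q$ replaced by $q^2$. The type B $q$-Stirling numbers of the second kind $S_B[n,k]$ are defined by $S_B[0,k]=\delta_{0k}$ and $S_B[n,k]=S_B[n-1,k-1]+[2k+1]_q\,S_B[n-1,k]$ for $n\ge1$ (with $S_B[n-1,-1]=0$). Let $\mathcal{B}_n$ be the group of signed permutations of $[n]$, i.e. bijections $\pi$ of $\{\pm1,\dots,\pm n\}$ with $\pi(-i)=-\pi(i)$, written $\pi=\pi_1\cdots\pi_n$ with $\pi_i=\pi(i)$, integers ordered naturally $-n<\dots<-1<0<1<\dots<n$. Set $\pi_0=0$; $\mathrm{Des}_B(\pi)=\{i\in\{0,1,\dots,n-1\}:\pi_i>\pi_{i+1}\}$, $\mathrm{des}_B(\pi)=|\mathrm{Des}_B(\pi)|$, $\mathrm{neg}(\pi)=|\{i\in[n]:\pi_i<0\}|$, and the flag-major index $\mathrm{fmaj}(\pi)=\sum_{i\in\mathrm{Des}_B(\pi)}2i+\mathrm{neg}(\pi)$.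 Define $B_{n,k}(q)$ by $\sum_{\pi\in\mathcal{B}_n}t^{\mathrm{des}_B(\pi)}q^{\mathrm{fmaj}(\pi)}=\sum_{k=0}^n B_{n,k}(q)t^k$. *)

theory Defs
  imports Complex_Main
begin

definition qint :: "real \<Rightarrow> nat \<Rightarrow> real" where
  "qint q k = (\<Sum>i<k. q ^ i)"

definition qfact :: "real \<Rightarrow> nat \<Rightarrow> real" where
  "qfact q n = (\<Prod>i=1..n. qint q i)"

definition qbinom :: "real \<Rightarrow> nat \<Rightarrow> nat \<Rightarrow> real" where
  "qbinom q n k = qfact q n / (qfact q k * qfact q (n - k))"

fun SB :: "real \<Rightarrow> nat \<Rightarrow> nat \<Rightarrow> real" where
  "SB q 0 k = (if k = 0 then 1 else 0)"
| "SB q (Suc n) k = (if k = 0 then 0 else SB q n (k - 1)) + qint q (2 * k + 1) * SB q n k"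

text \<open>Signed permutations of [n]: odd bijections of {-n..n}-{0}, identity outside.
  Oddness forces pi 0 = 0, matching the convention pi_0 = 0.\<close>
definition signed_perms :: "nat \<Rightarrow> (int \<Rightarrow> int) set" where
  "signed_perms n = {p. bij_betw p ({- int n..int n} - {0}) ({- int n..int n} - {0})
      \<and> (\<forall>i. p (- i) = - p i)
      \<and> (\<forall>i. i \<notin> {- int n..int n} - {0} \<longrightarrow> p i = i)}"

definition DesB :: "nat \<Rightarrow> (int \<Rightarrow> int) \<Rightarrow> nat set" where
  "DesB n p = {i. i < n \<and> p (int i) > p (int i + 1)}"

definition desB :: "nat \<Rightarrow> (int \<Rightarrow> int) \<Rightarrow> nat" where
  "desB n p = card (DesB n p)"

definition negB :: "nat \<Rightarrow> (int \<Rightarrow> int) \<Rightarrow> nat" where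
  "negB n p = card {i::nat. 1 \<le> i \<and> i \<le> n \<and> p (int i) < 0}"

definition fmaj :: "nat \<Rightarrow> (int \<Rightarrow> int) \<Rightarrow> nat" where
  "fmaj n p = (\<Sum>i\<in>DesB n p. 2 * i) + negB n p"

text \<open>B_{n,k}(q): coefficient of t^k in the (des_B, fmaj) generating polynomial.\<close>
definition Bnk :: "real \<Rightarrow> nat \<Rightarrow> nat \<Rightarrow> real" where
  "Bnk q n k = (\<Sum>p\<in>{p \<in> signed_perms n. desB n p = k}. q ^ fmaj n p)"

end

theory Submission
  imports Defs
begin


lemma qint_0[simp]: "qint q 0 = 0" by (simp add: qint_def)
lemma qint_Suc: "qint q (Suc k) = qint q k + q ^ k" by (simp add: qint_def)
lemma qint_1[simp]: "qint q 1 = 1" by (simp add: qint_def)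
lemma qint_Suc0[simp]: "qint q (Suc 0) = 1" by (simp add: qint_def)

lemma qint_add: "qint q (a + b) = qint q a + q ^ a * qint q b"
  by (induction b) (simp_all add: qint_Suc algebra_simps power_add)

lemma qint_2: "qint q 2 = 1 + q" by (simp add: qint_def numeral_2_eq_2)

lemma qint2_mult: "qint q 2 * qint (q^2) m = qint q (2*m)"
proof (induction m)
  case 0 then show ?case by simp
next
  case (Suc m)
  have "qint q (2 * Suc m) = qint q (2*m) + q^(2*m) + q^(2*m+1)"
    by (simp add: qint_Suc)
  moreover have "(q^2)^m = q^(2*m)" by (simp add: power_mult)
  ultimately show ?case using Suc by (simp add: qint_Suc qint_2 algebra_simps)
qed

lemma qint_nonneg: "q > 0 \<Longrightarrow> qint q k \<ge> 0"
  unfolding qint_def by (intro sum_nonneg) auto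

lemma qint_pos: "q > 0 \<Longrightarrow> k \<ge> 1 \<Longrightarrow> qint q k > 0"
proof -
  assume "q > 0" "k \<ge> 1"
  then obtain k' where "k = Suc k'" by (cases k) auto
  then show ?thesis using qint_nonneg[OF \<open>q>0\<close>, of k'] \<open>q>0\<close> by (simp add: qint_Suc add_nonneg_pos)
qed

lemma qfact_0[simp]: "qfact q 0 = 1" by (simp add: qfact_def)
lemma qfact_Suc: "qfact q (Suc n) = qfact q n * qint q (Suc n)"
  by (simp add: qfact_def prod.nat_ivl_Suc')

lemma qfact_pos: "q > 0 \<Longrightarrow> qfact q n > 0"
  by (induction n) (simp_all add: qfact_Suc qint_pos)

lemma qint_closed: "(1 - q) * qint q m = 1 - q ^ m"
proof (induction m)
  case (Suc m)
  have "(1 - q) * qint q (Suc m) = (1-q) * qint q m + (1-q) * q^m" by (simp add: qint_Suc algebra_simps)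
  then show ?case using Suc by (simp add: algebra_simps)
qed simp

definition G :: "real \<Rightarrow> nat \<Rightarrow> nat \<Rightarrow> real" where
  "G x n k = (if k \<le> n then qbinom x n k else 0)"

lemma G_0[simp]: "x > 0 \<Longrightarrow> G x n 0 = 1"
  using qfact_pos[of x n] by (simp add: G_def qbinom_def)

lemma G_nn[simp]: "x > 0 \<Longrightarrow> G x n n = 1"
  using qfact_pos[of x n] by (simp add: G_def qbinom_def)

lemma G_P:
  assumes x: "x > 0" and K: "1 \<le> K"
  shows "G x (Suc N) K = G x N K + x ^ (Suc N - K) * G x N (K - 1)"
proof -
  consider "K \<le> N" | "K = Suc N" | "K > Suc N" by linarith
  then show ?thesis
  proof cases
    case 1
    then obtain M where N: "N = K + M" using le_Suc_ex by blast
    obtain K0 where K0: "K = Suc K0" using K by (cases K) auto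
    have e1: "Suc N - K = Suc M" "N - K = M" "N - (K - 1) = Suc M" "Suc N = K0 + Suc (Suc M)" using N K0 by auto
    have add: "qint x (Suc N) = qint x (Suc M) + x ^ Suc M * qint x K"
      using qint_add[of x "Suc M" K] N by (simp add: add.commute)
    have pos: "qfact x K0 > 0" "qfact x M > 0" "qint x K > 0" "qint x (Suc M) > 0"
      using qfact_pos qint_pos x K by auto
    have "G x (Suc N) K = qfact x N * qint x (Suc N) / (qfact x K0 * qint x K * (qfact x M * qint x (Suc M)))"
      using 1 e1 K0 by (simp add: G_def qbinom_def qfact_Suc)
    also have "\<dots> = qfact x N / (qfact x K0 * qint x K * qfact x M) + x ^ Suc M * (qfact x N / (qfact x K0 * (qfact x M * qint x (Suc M))))"
      using pos unfolding add by (simp add: field_simps)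
    also have "\<dots> = G x N K + x ^ (Suc N - K) * G x N (K - 1)"
      using 1 e1 K0 by (simp add: G_def qbinom_def qfact_Suc)
    finally show ?thesis .
  next
    case 2 then show ?thesis using x G_nn[OF x, of N] G_nn[OF x, of "Suc N"] by (simp add: G_def)
  next
    case 3 then show ?thesis by (auto simp add: G_def)
  qed
qed

lemma G_Q:
  assumes x: "x > 0" and K: "1 \<le> K"
  shows "qint x K * G x N K = qint x (Suc N - K) * G x N (K - 1)"
proof -
  consider "K \<le> N" | "K = Suc N" | "K > Suc N" by linarith
  then show ?thesis
  proof cases
    case 1
    then obtain M where N: "N = K + M" using le_Suc_ex by blast
    obtain K0 where K0: "K = Suc K0" using K by (cases K) auto
    have e1: "Suc N - K = Suc M" "N - K = M" "N - (K - 1) = Suc M" using N K0 by auto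
    have pos: "qfact x K0 > 0" "qfact x M > 0" "qint x K > 0" "qint x (Suc M) > 0"
      using qfact_pos qint_pos x K by auto
    show ?thesis
      using 1 e1 K0 pos by (simp add: G_def qbinom_def qfact_Suc field_simps)
  next
    case 2 then show ?thesis by (simp add: G_def)
  next
    case 3 then show ?thesis by (auto simp add: G_def)
  qed
qed


lemma E2:
  fixes q :: real and K0 M l :: nat
  assumes q: "q > 0"
  shows "q^(2*K0+1) * qint q (2*l+1) * (qint q (2*M) + q^(2*M) * qint q (2*Suc K0))
       + qint q (2*M+2*K0+1) * qint q (2*Suc K0)
     = qint q (2*(Suc K0 + l)) * qint q (2*Suc K0) + q^(2*K0+1) * qint q (2*(Suc K0+l)+1) * qint q (2*M)"
    (is "?L = ?R")
proof (cases "q = 1")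
  case True
  then show ?thesis by (simp add: qint_def algebra_simps)
next
  case False
  then have d: "(1 - q)^2 \<noteq> 0" by simp
  define f where "f m = (1 - q) * qint q m" for m
  have f: "f m = 1 - q^m" for m unfolding f_def by (rule qint_closed)
  have "(1-q)^2 * ?L = q^(2*K0+1) * f (2*l+1) * (f (2*M) + q^(2*M) * f (2*Suc K0)) + f (2*M+2*K0+1) * f (2*Suc K0)"
    unfolding f_def by (simp add: algebra_simps power2_eq_square)
  also have "\<dots> = f (2*(Suc K0 + l)) * f (2*Suc K0) + q^(2*K0+1) * f (2*(Suc K0+l)+1) * f (2*M)"
    unfolding f by (simp add: power_add power_mult algebra_simps)
  also have "\<dots> = (1-q)^2 * ?R"
    unfolding f_def by (simp add: algebra_simps power2_eq_square)
  finally show ?thesis using d by simp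
qed

lemma core:
  fixes q :: real and k l N :: nat
  assumes q: "q > 0" and lk: "l < k"
  defines "x \<equiv> q^2" and "K \<equiv> k - l"
  defines "w \<equiv> q powi (2 * int l + 1 - 2 * int k)"
  shows "qint q (2*l+1) * G x (Suc N) K + w * qint q (2*N+1) * G x N (K-1)
       = w * qint q 2 * qint x k * G x N (K-1) + qint q (2*k+1) * G x N K"
proof (cases "K \<le> Suc N")
  case False
  then have "\<not> K - 1 \<le> N" "\<not> K \<le> N" by auto
  then show ?thesis using False by (simp only: G_def if_False)
next
  case True
  have x: "x > 0" using q by (simp add: x_def)
  have K1: "1 \<le> K" using lk by (simp add: K_def)
  obtain K0 where K0: "K = Suc K0" using K1 by (cases K) auto
  define M where "M = Suc N - K"
  have N: "N = M + K0" using True K0 by (simp add: M_def)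
  have k: "k = Suc K0 + l" using K0 lk by (simp add: K_def)
  define A where "A = G x N (K-1)"
  define C where "C = G x N K"
  have P: "G x (Suc N) K = C + x^M * A" unfolding C_def A_def M_def by (rule G_P[OF x K1])
  have Q: "qint x K * C = qint x M * A" unfolding C_def A_def M_def by (rule G_Q[OF x K1])
  have w: "w * q^(2*K0+1) = 1"
  proof -
    have "w * q^(2*K0+1) = q powi (2 * int l + 1 - 2 * int k) * q powi (int (2*K0+1))"
      unfolding w_def power_int_of_nat ..
    also have "\<dots> = q powi (2 * int l + 1 - 2 * int k + int (2*K0+1))"
      using q by (intro power_int_add[symmetric]) simp
    also have "\<dots> = 1" using k by simp
    finally show ?thesis .
  qed
  have t2: "qint q 2 * qint x m = qint q (2*m)" for m unfolding x_def by (rule qint2_mult)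
  have xM: "x^M = q^(2*M)" by (simp add: x_def power_mult)
  define Z where "Z = qint x K * qint q 2 * q^(2*K0+1)"
  have Zpos: "Z \<noteq> 0" using qint_pos[OF x K1] q by (simp add: Z_def qint_2)
  have "Z * (qint q (2*l+1) * G x (Suc N) K + w * qint q (2*N+1) * G x N (K-1))
      = q^(2*K0+1) * qint q (2*l+1) * (qint q 2 * (qint x K * C)) + q^(2*K0+1) * qint q (2*l+1) * x^M * (qint q 2 * qint x K) * A
        + (w * q^(2*K0+1)) * qint q (2*N+1) * (qint q 2 * qint x K) * A"
    unfolding P Z_def A_def[symmetric] by (simp add: algebra_simps)
  also have "\<dots> = A * (q^(2*K0+1) * qint q (2*l+1) * (qint q (2*M) + q^(2*M) * qint q (2*Suc K0))
       + qint q (2*M+2*K0+1) * qint q (2*Suc K0))"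
  proof -
    have Q2: "qint q 2 * (qint x K * C) = qint q (2*M) * A" using Q t2[of M] by (metis mult.assoc)
    have T2K: "qint q 2 * qint x K = qint q (2*Suc K0)" using t2[of K] K0 by simp
    have NN: "2*N+1 = 2*M+2*K0+1" using N by simp
    show ?thesis unfolding Q2 T2K w xM NN by (simp add: algebra_simps)
  qed
  also have "\<dots> = A * (qint q (2*(Suc K0 + l)) * qint q (2*Suc K0) + q^(2*K0+1) * qint q (2*(Suc K0+l)+1) * qint q (2*M))"
    using E2[OF q] by simp
  also have "\<dots> = (w * q^(2*K0+1)) * (qint q 2 * qint x k) * (qint q 2 * qint x K) * A + q^(2*K0+1) * qint q (2*k+1) * (qint q 2 * (qint x K * C))"
  proof -
    have Q2: "qint q 2 * (qint x K * C) = qint q (2*M) * A" using Q t2[of M] by (metis mult.assoc)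
    have T2K: "qint q 2 * qint x K = qint q (2*Suc K0)" using t2[of K] K0 by simp
    have T2k: "qint q 2 * qint x k = qint q (2*(Suc K0 + l))" using t2[of k] k by simp
    show ?thesis unfolding Q2 T2K T2k w using k by (simp add: algebra_simps)
  qed
  also have "\<dots> = Z * (w * qint q 2 * qint x k * G x N (K-1) + qint q (2*k+1) * G x N K)"
    unfolding Z_def A_def C_def by (simp add: algebra_simps)
  finally show ?thesis using Zpos by simp
qed

lemma powi_mult_eq:
  fixes q :: real
  assumes "q > 0" "a + b = c + d"
  shows "q powi a * q powi b = q powi c * q powi d"
  using assms by (simp add: power_int_add[symmetric])

lemma main_alg:
  fixes q :: real and B :: "nat \<Rightarrow> nat \<Rightarrow> real"
  assumes q: "q > 0"
    and B0: "\<And>l. B 0 l = (if l = 0 then 1 else 0)"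
    and BS: "\<And>n l. B (Suc n) l = qint q (2*l+1) * B n l
              + (if l = 0 then 0 else q^(2*l-1) * qint q (2*n+3-2*l) * B n (l-1))"
  shows "qint q 2 ^ k * qfact (q^2) k * SB q n k =
    (\<Sum>l\<le>k. q powi (int k * (int k - 2 * int l)) * B n l * G (q^2) (n - l) (k - l))"
proof -
  define x where "x = q^2"
  have x: "x > 0" using q by (simp add: x_def)
  define c where "c k l = q powi (int k * (int k - 2 * int l))" for k l :: nat
  have Bvan: "B n l = 0" if "l > n" for n l
    using that
  proof (induction n arbitrary: l)
    case 0 then show ?case by (simp add: B0)
  next
    case (Suc n) then show ?case by (simp add: BS)
  qed
  have "qint q 2 ^ k * qfact x k * SB q n k = (\<Sum>l\<le>k. c k l * B n l * G x (n - l) (k - l))"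
  proof (induction n arbitrary: k)
    case 0
    show ?case
    proof (cases k)
      case 0 then show ?thesis using x by (simp add: B0 c_def)
    next
      case (Suc k')
      have "(\<Sum>l\<le>k. c k l * B 0 l * G x (0 - l) (k - l)) = 0"
        by (intro sum.neutral) (auto simp: B0 G_def Suc)
      then show ?thesis using Suc by simp
    qed
  next
    case (Suc n)
    show ?case
    proof (cases k)
      case 0
      have "qint q 2 ^ k * qfact x k * SB q (Suc n) k = B n 0"
        using Suc.IH[of 0] x 0 by (simp add: c_def)
      also have "\<dots> = (\<Sum>l\<le>k. c k l * B (Suc n) l * G x (Suc n - l) (k - l))"
        using x 0 by (simp add: c_def BS)
      finally show ?thesis .
    next
      case (Suc k')
      let ?R = "\<lambda>n k. (\<Sum>l\<le>k. c k l * B n l * G x (n - l) (k - l))"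
      have "qint q 2 ^ k * qfact x k * SB q (Suc n) k
          = qint q 2 * qint x k * (qint q 2 ^ k' * qfact x k' * SB q n k')
            + qint q (2*k+1) * (qint q 2 ^ k * qfact x k * SB q n k)"
        using Suc by (simp add: qfact_Suc algebra_simps)
      also have "\<dots> = qint q 2 * qint x k * ?R n k' + qint q (2*k+1) * ?R n k"
        using Suc.IH by simp
      also have "\<dots> = ?R (Suc n) k"
      proof -
        define f1 where "f1 l = c k l * (qint q (2*l+1) * B n l) * G x (Suc n - l) (k - l)" for l
        define f2 where "f2 l = c k l * (if l = 0 then 0 else q^(2*l-1) * qint q (2*n+3-2*l) * B n (l-1)) * G x (Suc n - l) (k - l)" for l
        have R1: "?R (Suc n) k = sum f1 {..k} + sum f2 {..k}"
          unfolding f1_def f2_def BS by (simp add: algebra_simps sum.distrib)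
        have s1: "sum f1 {..k} = (\<Sum>l\<le>k'. f1 l) + c k k * qint q (2*k+1) * B n k"
          using Suc x by (simp add: f1_def)
        have s2: "sum f2 {..k} = (\<Sum>l\<le>k'. c k (Suc l) * q^(2*l+1) * qint q (2*n+1-2*l) * B n l * G x (n - l) (k' - l))"
          unfolding f2_def Suc sum.atMost_Suc_shift by (simp add: mult_ac)
        have s3: "?R n k = (\<Sum>l\<le>k'. c k l * B n l * G x (n - l) (k - l)) + c k k * B n k"
          using Suc x by simp
        have tw: "f1 l + c k (Suc l) * q^(2*l+1) * qint q (2*n+1-2*l) * B n l * G x (n - l) (k' - l)
           = qint q 2 * qint x k * (c k' l * B n l * G x (n - l) (k' - l)) + qint q (2*k+1) * (c k l * B n l * G x (n - l) (k - l))"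
          if l: "l \<le> k'" for l
        proof (cases "l \<le> n")
          case False
          then show ?thesis using Bvan[of n l] by (simp add: f1_def)
        next
          case True
          define N where "N = n - l"
          define w where "w = q powi (2 * int l + 1 - 2 * int k)"
          have lk: "l < k" using l Suc by simp
          have e: "Suc n - l = Suc N" "2*n+1-2*l = 2*N+1" "k' - l = k - l - 1" using True Suc l by (auto simp: N_def)
          have cw1: "c k (Suc l) * q^(2*l+1) = c k l * w"
            unfolding c_def w_def power_int_of_nat[symmetric]
            by (rule powi_mult_eq[OF q]) (simp add: algebra_simps)
          have cw2: "c k' l = c k l * w"
          proof -
            have "c k l * w = q powi (int k * (int k - 2 * int l) + (2 * int l + 1 - 2 * int k))"
              unfolding c_def w_def using q by (simp add: power_int_add)
            also have "\<dots> = c k' l" unfolding c_def using Suc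
              by (intro arg_cong[where f="\<lambda>e. q powi e"]) (simp add: algebra_simps)
            finally show ?thesis by simp
          qed
          have C: "qint q (2*l+1) * G x (Suc N) (k-l) + w * qint q (2*N+1) * G x N (k-l-1)
             = w * qint q 2 * qint x k * G x N (k-l-1) + qint q (2*k+1) * G x N (k-l)"
            using core[OF q lk, of N] unfolding x_def w_def by simp
          have "f1 l + c k (Suc l) * q^(2*l+1) * qint q (2*n+1-2*l) * B n l * G x (n - l) (k' - l)
              = c k l * B n l * (qint q (2*l+1) * G x (Suc N) (k-l) + w * qint q (2*N+1) * G x N (k-l-1))"
            unfolding f1_def e cw1 N_def by (simp add: algebra_simps)
          also have "\<dots> = c k l * B n l * (w * qint q 2 * qint x k * G x N (k-l-1) + qint q (2*k+1) * G x N (k-l))"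
            unfolding C ..
          also have "\<dots> = qint q 2 * qint x k * (c k' l * B n l * G x (n - l) (k' - l)) + qint q (2*k+1) * (c k l * B n l * G x (n - l) (k - l))"
            unfolding cw2 e N_def by (simp add: algebra_simps)
          finally show ?thesis .
        qed
        have "?R (Suc n) k = (\<Sum>l\<le>k'. f1 l + c k (Suc l) * q^(2*l+1) * qint q (2*n+1-2*l) * B n l * G x (n - l) (k' - l)) + c k k * qint q (2*k+1) * B n k"
          unfolding R1 s1 s2 sum.distrib by simp
        also have "\<dots> = (\<Sum>l\<le>k'. qint q 2 * qint x k * (c k' l * B n l * G x (n - l) (k' - l)) + qint q (2*k+1) * (c k l * B n l * G x (n - l) (k - l))) + c k k * qint q (2*k+1) * B n k"
          using tw by simp
        also have "\<dots> = qint q 2 * qint x k * ?R n k' + qint q (2*k+1) * ?R n k"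
          unfolding s3 sum.distrib sum_distrib_left[symmetric] by (simp add: algebra_simps)
        finally show ?thesis by simp
      qed
      finally show ?thesis .
    qed
  qed
  then show ?thesis unfolding x_def c_def .
qed


fun dd :: "int \<Rightarrow> int list \<Rightarrow> nat" where
  "dd a [] = 0"
| "dd a (x # xs) = (if a > x then 1 else 0) + dd x xs"

fun mm :: "int \<Rightarrow> nat \<Rightarrow> int list \<Rightarrow> nat" where
  "mm a k [] = 0"
| "mm a k (x # xs) = (if a > x then k else 0) + mm x (Suc k) xs"

fun ng :: "int list \<Rightarrow> nat" where
  "ng [] = 0"
| "ng (x # xs) = (if x < 0 then 1 else 0) + ng xs"

definition Phi :: "int \<Rightarrow> nat \<Rightarrow> int list \<Rightarrow> nat" where
  "Phi a k xs = 2 * mm a k xs + ng xs"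

definition ins :: "nat \<Rightarrow> int \<Rightarrow> int list \<Rightarrow> int list" where
  "ins j v xs = take j xs @ v # drop j xs"

lemma mm_shift: "mm a (Suc k) xs = mm a k xs + dd a xs"
  by (induction xs arbitrary: a k) auto

lemma dd_le: "dd a xs \<le> length xs"
  by (induction xs arbitrary: a) (simp_all add: le_SucI)

lemma ins_Suc: "ins (Suc j) v (x # xs) = x # ins j v xs"
  by (simp add: ins_def)

lemma ins_0: "ins 0 v xs = v # xs"
  by (simp add: ins_def)

lemma Phi_Cons: "Phi a k (x # ys) = 2 * (if a > x then k else 0) + Phi x (Suc k) ys + (if x < 0 then 1 else 0)"
  by (simp add: Phi_def)

lemma key:
  fixes g :: "nat \<Rightarrow> nat \<Rightarrow> real" and N :: int
  assumes "distinct (a # xs)" "\<forall>y\<in>set (a # xs). - N < y \<and> y < N"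
  shows "(\<Sum>j\<le>length xs. g (dd a (ins j N xs)) (Phi a k (ins j N xs))
                        + g (dd a (ins j (-N) xs)) (Phi a k (ins j (-N) xs)))
   = (\<Sum>c<2 * dd a xs + 1. g (dd a xs) (Phi a k xs + c))
     + (\<Sum>c<2 * length xs + 1 - 2 * dd a xs. g (Suc (dd a xs)) (Phi a k xs + 2 * k + 2 * dd a xs + 1 + c))"
  using assms
proof (induction xs arbitrary: a k g)
  case Nil
  then have "N > 0" by auto
  then show ?case using Nil.prems by (simp add: ins_def Phi_def)
next
  case (Cons x xs)
  have dist: "distinct (x # xs)" and bnd: "\<forall>y\<in>set (x # xs). - N < y \<and> y < N"
    using Cons.prems by auto
  have ax: "a \<noteq> x" using Cons.prems by auto
  have Npos: "N > 0" "x < N" "-N < x" "a < N" "-N < a" using Cons.prems by auto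
  define d' where "d' = dd x xs"
  define P' where "P' = Phi x (Suc k) xs"
  define m where "m = length xs"
  define e where "e = (if x < 0 then 1 else 0::nat)"
  have dle: "d' \<le> m" unfolding d'_def m_def by (rule dd_le)
  have j0N: "dd a (ins 0 N (x # xs)) = Suc d'" "Phi a k (ins 0 N (x # xs)) = P' + 2 * Suc k + 2 * d' + e"
    using Npos by (simp_all add: ins_0 d'_def P'_def e_def Phi_def mm_shift)
  have j0M: "dd a (ins 0 (-N) (x # xs)) = Suc d'" "Phi a k (ins 0 (-N) (x # xs)) = P' + 2 * k + 2 * d' + 1 + e"
    using Npos by (simp_all add: ins_0 d'_def P'_def e_def Phi_def mm_shift)
  let ?H = "\<lambda>g' a k xs j. g' (dd a (ins j N xs)) (Phi a k (ins j N xs)) + g' (dd a (ins j (-N) xs)) (Phi a k (ins j (-N) xs))"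
  have split: "(\<Sum>j\<le>length (x # xs). ?H g a k (x # xs) j)
      = g (Suc d') (P' + 2 * Suc k + 2 * d' + e) + g (Suc d') (P' + 2 * k + 2 * d' + 1 + e)
        + (\<Sum>j\<le>m. ?H g a k (x # xs) (Suc j))"
    unfolding m_def length_Cons sum.atMost_Suc_shift j0N j0M by (simp only: add.assoc)
  show ?case
  proof (cases "a > x")
    case True
    define g' where "g' d f = g (Suc d) (f + 2 * k + e)" for d f
    have "(\<Sum>j\<le>m. ?H g a k (x # xs) (Suc j)) = (\<Sum>j\<le>m. ?H g' x (Suc k) xs j)"
      using True by (simp add: ins_Suc Phi_Cons g'_def e_def add_ac)
    also have "\<dots> = (\<Sum>c<2 * d' + 1. g' d' (P' + c))
       + (\<Sum>c<2 * m + 1 - 2 * d'. g' (Suc d') (P' + 2 * Suc k + 2 * d' + 1 + c))"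
      unfolding m_def d'_def P'_def by (rule Cons.IH[OF dist bnd])
    finally have IH: "(\<Sum>j\<le>m. ?H g a k (x # xs) (Suc j)) = \<dots>" .
    have dd: "dd a (x # xs) = Suc d'" and PP: "Phi a k (x # xs) = P' + 2 * k + e"
      using True by (simp_all add: d'_def P'_def e_def Phi_Cons)
    have r1: "2 * Suc d' + 1 = Suc (Suc (2 * d' + 1))" by simp
    have r2: "2 * length (x # xs) + 1 - 2 * Suc d' = 2 * m + 1 - 2 * d'" by (simp add: m_def)
    show ?thesis
      unfolding split IH dd PP r1 r2 sum.lessThan_Suc
      by (simp add: g'_def algebra_simps)
  next
    case False
    then have ax2: "a < x" using ax by simp
    define g' where "g' d f = g d (f + e)" for d f
    have "(\<Sum>j\<le>m. ?H g a k (x # xs) (Suc j)) = (\<Sum>j\<le>m. ?H g' x (Suc k) xs j)"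
      using False by (simp add: ins_Suc Phi_Cons g'_def e_def add_ac)
    also have "\<dots> = (\<Sum>c<2 * d' + 1. g' d' (P' + c))
       + (\<Sum>c<2 * m + 1 - 2 * d'. g' (Suc d') (P' + 2 * Suc k + 2 * d' + 1 + c))"
      unfolding m_def d'_def P'_def by (rule Cons.IH[OF dist bnd])
    finally have IH: "(\<Sum>j\<le>m. ?H g a k (x # xs) (Suc j)) = \<dots>" .
    have dd: "dd a (x # xs) = d'" and PP: "Phi a k (x # xs) = P' + e"
      using False by (simp_all add: d'_def P'_def e_def Phi_Cons)
    have r2: "2 * length (x # xs) + 1 - 2 * d' = Suc (Suc (2 * m + 1 - 2 * d'))" using dle by (simp add: m_def)
    show ?thesis
      unfolding split IH dd PP r2 sum.lessThan_Suc_shift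
      by (simp add: g'_def algebra_simps)
  qed
qed


definition SPl :: "nat \<Rightarrow> int list set" where
  "SPl n = {xs. length xs = n \<and> distinct (map abs xs) \<and> set (map abs xs) = {1..int n}}"

lemma SPl_finite: "finite (SPl n)"
proof -
  have "SPl n \<subseteq> {xs. set xs \<subseteq> {- int n..int n} \<and> length xs = n}"
  proof
    fix xs assume "xs \<in> SPl n"
    then have "length xs = n" "\<forall>y\<in>set xs. abs y \<in> {1..int n}" by (auto simp: SPl_def)
    then show "xs \<in> {xs. set xs \<subseteq> {- int n..int n} \<and> length xs = n}" by force
  qed
  then show ?thesis using finite_lists_length_eq[of "{- int n..int n}" n] finite_subset by blast
qed

lemma SPl_props:
  assumes "xs \<in> SPl n"
  shows "distinct (0 # xs)" "\<forall>y\<in>set (0 # xs). - (int n + 1) < y \<and> y < int n + 1" "length xs = n"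
proof -
  have d: "distinct (map abs xs)" and s: "set (map abs xs) = {1..int n}" and l: "length xs = n"
    using assms by (auto simp: SPl_def)
  have b: "abs y \<in> {1..int n}" if "y \<in> set xs" for y using s that by auto
  show "distinct (0 # xs)" using d b by (auto simp: distinct_map) (metis abs_zero atLeastAtMost_iff b not_one_le_zero)
  show "\<forall>y\<in>set (0 # xs). - (int n + 1) < y \<and> y < int n + 1" using b by fastforce
  show "length xs = n" by (fact l)
qed

lemma distinct_ins_mid:
  assumes "distinct A" "c \<notin> set A"
  shows "distinct (take j A @ c # drop j A)"
proof -
  have "distinct (take j A @ drop j A)" using assms by simp
  then have "distinct (take j A)" "distinct (drop j A)" "set (take j A) \<inter> set (drop j A) = {}"
    by (simp_all only: distinct_append)
  then show ?thesis using assms(2) set_take_subset[of j A] set_drop_subset[of j A]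
    by auto
qed

lemma ins_SPl:
  assumes xs: "xs \<in> SPl n" and j: "j \<le> n" and v: "v \<in> {int n + 1, - (int n + 1)}"
  shows "ins j v xs \<in> SPl (Suc n)"
proof -
  let ?A = "map abs xs"
  have d: "distinct ?A" and s: "set ?A = {1..int n}" and l: "length xs = n"
    using xs by (auto simp: SPl_def)
  have av: "abs v = int n + 1" using v by auto
  have m: "map abs (ins j v xs) = take j ?A @ (int n + 1) # drop j ?A"
    by (simp add: ins_def take_map drop_map av)
  have nin: "int n + 1 \<notin> set ?A" using s by auto
  have st: "set (take j ?A) \<union> set (drop j ?A) = set ?A"
    by (metis append_take_drop_id set_append)
  have L: "length (ins j v xs) = Suc n" using l j by (simp add: ins_def)
  have D: "distinct (map abs (ins j v xs))" unfolding m by (rule distinct_ins_mid[OF d nin])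
  have "set (map abs (ins j v xs)) = insert (int n + 1) (set (take j ?A) \<union> set (drop j ?A))"
    unfolding m by auto
  also have "\<dots> = {1..int (Suc n)}" unfolding st s by auto
  finally show ?thesis using L D by (simp add: SPl_def)
qed

lemma ins_bij:
  "bij_betw (\<lambda>(xs, j, v). ins j v xs) (SPl n \<times> ({..n} \<times> {int n + 1, - (int n + 1)})) (SPl (Suc n))"
proof -
  let ?f = "\<lambda>(xs, j, v). ins j v xs"
  let ?D = "SPl n \<times> ({..n} \<times> {int n + 1, - (int n + 1)})"
  have into: "?f ` ?D \<subseteq> SPl (Suc n)" using ins_SPl by auto
  have inj: "inj_on ?f ?D"
  proof (rule inj_onI)
    fix t t' assume T: "t \<in> ?D" "t' \<in> ?D" "?f t = ?f t'"
    obtain xs j v where t: "t = (xs, j, v)" by (cases t) auto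
    obtain xs' j' v' where t': "t' = (xs', j', v')" by (cases t') auto
    have A: "(xs, j, v) \<in> ?D" "(xs', j', v') \<in> ?D" and eq: "ins j v xs = ins j' v' xs'"
      using T unfolding t t' by auto
    have l: "length xs = n" "length xs' = n" using A by (auto simp: SPl_def)
    have jn: "j \<le> n" "j' \<le> n" using A by auto
    have yin: "ins j v xs \<in> SPl (Suc n)" using A ins_SPl by auto
    then have dy: "distinct (map abs (ins j v xs))" and ly: "length (ins j v xs) = Suc n" by (auto simp: SPl_def)
    have avs: "abs v = int n + 1" "abs v' = int n + 1" using A by auto
    have n1: "map abs (ins j v xs) ! j = int n + 1" using l jn avs by (simp add: ins_def nth_append)
    have n2: "map abs (ins j v xs) ! j' = int n + 1" unfolding eq using l jn avs by (simp add: ins_def nth_append)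
    have jj: "j = j'" using nth_eq_iff_index_eq[OF dy, of j j'] n1 n2 ly jn by simp
    have "take j xs @ v # drop j xs = take j xs' @ v' # drop j xs'" using eq jj by (simp add: ins_def)
    then have "take j xs = take j xs'" "v = v'" "drop j xs = drop j xs'"
      using l jn by (auto simp: append_eq_append_conv)
    then have "xs = xs'" by (metis append_take_drop_id)
    then show "t = t'" using jj \<open>v = v'\<close> t t' by simp
  qed
  have onto: "SPl (Suc n) \<subseteq> ?f ` ?D"
  proof
    fix ys assume ys: "ys \<in> SPl (Suc n)"
    let ?B = "map abs ys"
    have d: "distinct ?B" and s: "set ?B = {1..int (Suc n)}" and l: "length ys = Suc n"
      using ys by (auto simp: SPl_def)
    have "int n + 1 \<in> set ?B" using s by auto
    then obtain j where j: "j < length ?B" "?B ! j = int n + 1" by (auto simp: in_set_conv_nth)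
    have jl: "j < Suc n" using j l by simp
    define v where "v = ys ! j"
    define xs where "xs = take j ys @ drop (Suc j) ys"
    have av: "abs v = int n + 1" using j by (simp add: v_def)
    have v: "v \<in> {int n + 1, - (int n + 1)}" using av by auto
    have Bdec: "?B = take j ?B @ (int n + 1) # drop (Suc j) ?B"
      using id_take_nth_drop[of j ?B] j by simp
    have mx: "map abs xs = take j ?B @ drop (Suc j) ?B" by (simp add: xs_def take_map drop_map)
    have d2: "distinct (take j ?B @ (int n + 1) # drop (Suc j) ?B)" using d Bdec by metis
    have "distinct (map abs xs)" using d2 unfolding mx by auto
    moreover have "set (map abs xs) = {1..int n}"
    proof -
      have "set ?B = set (take j ?B) \<union> insert (int n + 1) (set (drop (Suc j) ?B))"
        using Bdec by (metis set_append list.set(2))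
      moreover have "int n + 1 \<notin> set (take j ?B)" "int n + 1 \<notin> set (drop (Suc j) ?B)" using d2 by auto
      ultimately have "set (map abs xs) = set ?B - {int n + 1}" unfolding mx by auto
      then show ?thesis using s by auto
    qed
    moreover have "length xs = n" using jl l by (simp add: xs_def)
    ultimately have xsin: "xs \<in> SPl n" by (simp add: SPl_def)
    have "ins j v xs = take j ys @ ys ! j # drop (Suc j) ys"
      using jl l by (simp add: ins_def xs_def v_def)
    also have "\<dots> = ys" using id_take_nth_drop[of j ys] jl l by simp
    finally have "ys = ?f (xs, j, v)" by simp
    moreover have "(xs, j, v) \<in> ?D" using xsin jl v by auto
    ultimately show "ys \<in> ?f ` ?D" by blast
  qed
  show ?thesis unfolding bij_betw_def using inj into onto by blast
qed


lemma set_Suc_split: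
  "{i. i < Suc m \<and> P i} = (if P 0 then {0} else {}) \<union> Suc ` {i. i < m \<and> P (Suc i)}"
  apply (rule set_eqI)
  subgoal for i by (cases i) auto
  done

definition DS :: "int \<Rightarrow> int list \<Rightarrow> nat set" where
  "DS a xs = {i. i < length xs \<and> (a # xs) ! i > (a # xs) ! Suc i}"

lemma DS_Cons: "DS a (x # xs) = (if a > x then {0} else {}) \<union> Suc ` DS x xs"
  unfolding DS_def length_Cons
  using set_Suc_split[of "length xs" "\<lambda>i. (a # x # xs) ! Suc i < (a # x # xs) ! i"] by simp

lemma DS_finite: "finite (DS a xs)" unfolding DS_def by simp

lemma dd_DS: "dd a xs = card (DS a xs)"
proof (induction xs arbitrary: a)
  case Nil then show ?case by (simp add: DS_def)
next
  case (Cons x xs)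
  have "card (DS a (x # xs)) = (if a > x then 1 else 0) + card (Suc ` DS x xs)"
    unfolding DS_Cons by (subst card_Un_disjoint) (auto simp: DS_finite)
  then show ?case using Cons by (simp add: card_image)
qed

lemma mm_DS: "mm a k xs = (\<Sum>i\<in>DS a xs. k + i)"
proof (induction xs arbitrary: a k)
  case Nil then show ?case by (simp add: DS_def)
next
  case (Cons x xs)
  have "(\<Sum>i\<in>DS a (x # xs). k + i) = (if a > x then k else 0) + (\<Sum>i\<in>Suc ` DS x xs. k + i)"
    unfolding DS_Cons by (subst sum.union_disjoint) (auto simp: DS_finite)
  also have "(\<Sum>i\<in>Suc ` DS x xs. k + i) = (\<Sum>i\<in>DS x xs. Suc k + i)"
    by (subst sum.reindex) auto
  finally show ?case using Cons by simp
qed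

lemma ng_card: "ng xs = card {i. i < length xs \<and> xs ! i < 0}"
proof -
  have "ng xs = length (filter (\<lambda>y. y < 0) xs)" by (induction xs) auto
  then show ?thesis by (simp add: length_filter_conv_card)
qed

definition Lp :: "nat \<Rightarrow> (int \<Rightarrow> int) \<Rightarrow> int list" where
  "Lp n p = map (\<lambda>i. p (int i)) [1..<Suc n]"

lemma Lp_nth: "i < n \<Longrightarrow> Lp n p ! i = p (int (Suc i))"
  by (simp add: Lp_def del: upt_Suc)

lemma sp_0: "p \<in> signed_perms n \<Longrightarrow> p 0 = 0"
  unfolding signed_perms_def by (metis (mono_tags, lifting) add.inverse_neutral mem_Collect_eq neg_equal_zero)

lemma stats:
  assumes p: "p \<in> signed_perms n"
  shows "desB n p = dd 0 (Lp n p)" "fmaj n p = Phi 0 0 (Lp n p)"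
proof -
  have nth0: "(0 # Lp n p) ! i = p (int i)" if "i \<le> n" for i
    using that sp_0[OF p] by (cases i) (auto simp: Lp_nth)
  have len: "length (Lp n p) = n" by (simp add: Lp_def)
  have DSeq: "DS 0 (Lp n p) = DesB n p"
  proof -
    have nth1: "(0 # Lp n p) ! Suc i = p (int i + 1)" if "i < n" for i
      using that by (simp add: Lp_nth add.commute)
    have nth2: "(0 # Lp n p) ! i = p (int i)" if "i < n" for i using that nth0 by simp
    show ?thesis unfolding DS_def DesB_def len using nth1 nth2 by auto
  qed
  show "desB n p = dd 0 (Lp n p)" unfolding desB_def dd_DS DSeq ..
  have neg: "negB n p = ng (Lp n p)"
  proof -
    have "{i::nat. 1 \<le> i \<and> i \<le> n \<and> p (int i) < 0} = Suc ` {i. i < length (Lp n p) \<and> Lp n p ! i < 0}"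
      unfolding len
      apply (rule set_eqI)
      subgoal for i by (cases i) (auto simp: Lp_nth image_iff)
      done
    then show ?thesis unfolding negB_def ng_card by (simp add: card_image)
  qed
  show "fmaj n p = Phi 0 0 (Lp n p)"
    unfolding fmaj_def Phi_def mm_DS DSeq neg by (simp add: sum_distrib_left)
qed


declare upt_Suc[simp del]

lemma sp_facts:
  assumes "p \<in> signed_perms n"
  shows "bij_betw p ({- int n..int n} - {0}) ({- int n..int n} - {0})"
    "\<And>i. p (- i) = - p i" "\<And>i. i \<notin> {- int n..int n} - {0} \<Longrightarrow> p i = i"
  using assms unfolding signed_perms_def by auto

lemma Lp_SPl:
  assumes p: "p \<in> signed_perms n"
  shows "Lp n p \<in> SPl n"
proof -
  let ?S = "{- int n..int n} - {0}"
  note f = sp_facts[OF p]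
  have inj: "inj_on p ?S" using f(1) by (simp add: bij_betw_def)
  have img: "p z \<in> ?S" if "z \<in> ?S" for z using bij_betwE[OF f(1)] that by blast
  have m: "map abs (Lp n p) = map (\<lambda>i. \<bar>p (int i)\<bar>) [1..<Suc n]" by (simp add: Lp_def)
  have "inj_on (\<lambda>i. \<bar>p (int i)\<bar>) {1..<Suc n}"
  proof (rule inj_onI)
    fix i j assume ij: "i \<in> {1..<Suc n}" "j \<in> {1..<Suc n}" "\<bar>p (int i)\<bar> = \<bar>p (int j)\<bar>"
    have iS: "int i \<in> ?S" "int j \<in> ?S" "- int j \<in> ?S" using ij by auto
    from ij(3) have "p (int i) = p (int j) \<or> p (int i) = p (- int j)" using f(2)[of "int j"] by (auto simp: abs_eq_iff)
    then have "int i = int j \<or> int i = - int j" using inj iS by (auto dest: inj_onD)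
    then show "i = j" using ij by auto
  qed
  then have D: "distinct (map abs (Lp n p))" unfolding m by (simp add: distinct_map del: upt_Suc)
  have sub: "set (map abs (Lp n p)) \<subseteq> {1..int n}"
  proof
    fix y assume "y \<in> set (map abs (Lp n p))"
    then obtain i where i: "i \<in> {1..<Suc n}" "y = \<bar>p (int i)\<bar>" unfolding m by auto
    then have "p (int i) \<in> ?S" using img by auto
    then show "y \<in> {1..int n}" using i by auto
  qed
  have "card (set (map abs (Lp n p))) = length (map abs (Lp n p))" by (rule distinct_card[OF D])
  then have "card (set (map abs (Lp n p))) = n" by (simp add: Lp_def)
  then have "set (map abs (Lp n p)) = {1..int n}"
    using sub by (intro card_subset_eq) auto
  moreover have "length (Lp n p) = n" by (simp add: Lp_def)
  ultimately show ?thesis using D unfolding SPl_def by blast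
qed

lemma Lp_inj: "inj_on (Lp n) (signed_perms n)"
proof (rule inj_onI)
  fix p p' assume p: "p \<in> signed_perms n" and p': "p' \<in> signed_perms n" and eq: "Lp n p = Lp n p'"
  note f = sp_facts[OF p] and f' = sp_facts[OF p']
  have pos: "p (int i) = p' (int i)" if "1 \<le> i" "i \<le> n" for i
  proof -
    have "Lp n p ! (i - 1) = Lp n p' ! (i - 1)" using eq by simp
    then show ?thesis using that Lp_nth[of "i - 1" n] by simp
  qed
  show "p = p'"
  proof
    fix z :: int
    consider "1 \<le> z \<and> z \<le> int n" | "- int n \<le> z \<and> z \<le> -1" | "z \<notin> {- int n..int n} - {0}"
      by (cases "z \<in> {- int n..int n} - {0}"; cases "z \<ge> 1"; auto)
    then show "p z = p' z"
    proof cases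
      case 1
      then have "int (nat z) = z" "1 \<le> nat z" "nat z \<le> n" by auto
      then show ?thesis using pos[of "nat z"] by simp
    next
      case 2
      then have "int (nat (-z)) = -z" "1 \<le> nat (-z)" "nat (-z) \<le> n" by auto
      then have "p (- z) = p' (- z)" using pos[of "nat (- z)"] by simp
      then show ?thesis using f(2)[of "-z"] f'(2)[of "-z"] by simp
    next
      case 3 then show ?thesis using f(3) f'(3) by simp
    qed
  qed
qed


lemma Lp_onto:
  assumes xs: "xs \<in> SPl n"
  shows "\<exists>p \<in> signed_perms n. Lp n p = xs"
proof -
  let ?S = "{- int n..int n} - {0}"
  have d: "distinct (map abs xs)" and s: "set (map abs xs) = {1..int n}" and l: "length xs = n"
    using xs by (auto simp: SPl_def)
  have ab: "abs (xs ! k) \<in> {1..int n}" if "k < n" for k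
  proof -
    have "xs ! k \<in> set xs" using that l by simp
    then have "abs (xs ! k) \<in> set (map abs xs)" by simp
    then show ?thesis using s by simp
  qed
  define p where "p z = (if 1 \<le> z \<and> z \<le> int n then xs ! nat (z - 1)
      else if - int n \<le> z \<and> z \<le> -1 then - (xs ! nat (- z - 1)) else z)" for z
  have odd: "p (- z) = - p z" for z
  proof -
    consider "1 \<le> z \<and> z \<le> int n" | "- int n \<le> z \<and> z \<le> -1" | "\<not> (1 \<le> z \<and> z \<le> int n) \<and> \<not> (- int n \<le> z \<and> z \<le> -1)"
      by blast
    then show ?thesis
    proof cases
      case 1 then show ?thesis by (simp add: p_def)
    next
      case 2 then show ?thesis by (simp add: p_def)
    next
      case 3
      then have "\<not> (1 \<le> -z \<and> -z \<le> int n) \<and> \<not> (- int n \<le> -z \<and> -z \<le> -1)" by linarith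
      then show ?thesis using 3 by (simp only: p_def if_False)
    qed
  qed
  have out: "p z = z" if "z \<notin> ?S" for z
  proof -
    have "\<not> (1 \<le> z \<and> z \<le> int n) \<and> \<not> (- int n \<le> z \<and> z \<le> -1)" using that by auto
    then show ?thesis by (simp only: p_def if_False)
  qed
  have absp: "abs (p z) = abs (xs ! nat (abs z - 1))" if "z \<in> ?S" for z
  proof (cases "z \<ge> 1")
    case True then show ?thesis using that by (simp add: p_def)
  next
    case False
    then have "- int n \<le> z \<and> z \<le> -1" using that by auto
    then show ?thesis using False by (simp add: p_def)
  qed
  have absS: "abs (p z) \<in> {1..int n}" if "z \<in> ?S" for z
    using absp[OF that] ab[of "nat (abs z - 1)"] that by auto
  have sub: "p ` ?S \<subseteq> ?S" using absS by fastforce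
  have inj: "inj_on p ?S"
  proof (rule inj_onI)
    fix z z' assume z: "z \<in> ?S" and z': "z' \<in> ?S" and eq: "p z = p z'"
    have "abs (xs ! nat (abs z - 1)) = abs (xs ! nat (abs z' - 1))" using absp[OF z] absp[OF z'] eq by simp
    then have "map abs xs ! nat (abs z - 1) = map abs xs ! nat (abs z' - 1)" using z z' l by auto
    then have "nat (abs z - 1) = nat (abs z' - 1)" using nth_eq_iff_index_eq[OF d] z z' l by auto
    then have "abs z = abs z'" using z z' by auto
    then have "z = z' \<or> z = - z'" by (auto simp: abs_eq_iff)
    moreover have "z \<noteq> - z' \<or> z = z'"
    proof (rule ccontr)
      assume "\<not> (z \<noteq> - z' \<or> z = z')"
      then have "z = - z'" by simp
      then have "p z = - p z'" using odd by simp
      then have "p z = 0" using eq by simp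
      then show False using absS[OF z] by simp
    qed
    ultimately show "z = z'" by blast
  qed
  have bij: "bij_betw p ?S ?S" unfolding bij_betw_def using inj endo_inj_surj[OF _ sub inj] by simp
  have pin: "p \<in> signed_perms n" unfolding signed_perms_def using bij odd out by blast
  have "Lp n p = xs"
  proof (rule nth_equalityI)
    show "length (Lp n p) = length xs" using l by (simp add: Lp_def)
    fix i assume "i < length (Lp n p)"
    then have i: "i < n" by (simp add: Lp_def)
    have "Lp n p ! i = p (int (Suc i))" by (rule Lp_nth[OF i])
    also have "\<dots> = xs ! nat (int (Suc i) - 1)" using i by (simp add: p_def)
    also have "\<dots> = xs ! i" by simp
    finally show "Lp n p ! i = xs ! i" .
  qed
  then show ?thesis using pin by blast
qed

lemma Lp_bij: "bij_betw (Lp n) (signed_perms n) (SPl n)"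
  unfolding bij_betw_def using Lp_inj Lp_SPl Lp_onto by blast


lemma Bnk_list: "Bnk q n l = (\<Sum>xs\<in>SPl n. if dd 0 xs = l then q ^ Phi 0 0 xs else 0)"
proof -
  have fin: "finite (signed_perms n)" using bij_betw_finite[OF Lp_bij] SPl_finite by blast
  have "Bnk q n l = (\<Sum>p\<in>signed_perms n. if desB n p = l then q ^ fmaj n p else 0)"
    unfolding Bnk_def using sum.inter_filter[OF fin] by simp
  also have "\<dots> = (\<Sum>p\<in>signed_perms n. (\<lambda>xs. if dd 0 xs = l then q ^ Phi 0 0 xs else 0) (Lp n p))"
    by (rule sum.cong) (simp_all add: stats)
  also have "\<dots> = (\<Sum>xs\<in>SPl n. if dd 0 xs = l then q ^ Phi 0 0 xs else 0)"
    by (rule sum.reindex_bij_betw[OF Lp_bij])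
  finally show ?thesis .
qed

lemma Bnk_0: "Bnk q 0 l = (if l = 0 then 1 else 0)"
proof -
  have "SPl 0 = {[]}" by (auto simp: SPl_def)
  then show ?thesis unfolding Bnk_list by (simp add: Phi_def)
qed

lemma geom: "(\<Sum>c<m. q ^ (A + c)) = q ^ A * qint q m"
  by (simp add: qint_def power_add sum_distrib_left)

lemma Bnk_Suc: "Bnk q (Suc n) l = qint q (2*l+1) * Bnk q n l
   + (if l = 0 then 0 else q^(2*l-1) * qint q (2*n+3-2*l) * Bnk q n (l-1))"
proof -
  define h where "h ys = (if dd 0 ys = l then q ^ Phi 0 0 ys else 0)" for ys
  define N where "N = int n + 1"
  define g where "g d f = (if d = l then q ^ f else (0::real))" for d f :: nat
  have NN: "N \<noteq> - N" unfolding N_def by simp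
  have gsum: "(\<Sum>c<M. g d (P + c)) = (if d = l then q^P * qint q M else 0)" for M d P
    by (cases "d = l") (simp_all add: g_def geom)
  have "Bnk q (Suc n) l = (\<Sum>ys\<in>SPl (Suc n). h ys)" unfolding Bnk_list h_def ..
  also have "\<dots> = (\<Sum>t\<in>SPl n \<times> ({..n} \<times> {N, - N}). h ((\<lambda>(xs, j, v). ins j v xs) t))"
    unfolding N_def by (rule sum.reindex_bij_betw[OF ins_bij, symmetric])
  also have "\<dots> = (\<Sum>xs\<in>SPl n. \<Sum>jv\<in>{..n} \<times> {N, - N}. h (ins (fst jv) (snd jv) xs))"
    by (simp add: sum.cartesian_product split_def)
  also have "\<dots> = (\<Sum>xs\<in>SPl n. \<Sum>j\<le>n. h (ins j N xs) + h (ins j (-N) xs))"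
  proof (rule sum.cong[OF refl])
    fix xs
    have "(\<Sum>jv\<in>{..n} \<times> {N, - N}. h (ins (fst jv) (snd jv) xs)) = (\<Sum>j\<le>n. \<Sum>v\<in>{N, - N}. h (ins j v xs))"
      by (simp add: sum.cartesian_product split_def)
    also have "\<dots> = (\<Sum>j\<le>n. h (ins j N xs) + h (ins j (-N) xs))"
      using NN by simp
    finally show "(\<Sum>jv\<in>{..n} \<times> {N, - N}. h (ins (fst jv) (snd jv) xs)) = (\<Sum>j\<le>n. h (ins j N xs) + h (ins j (-N) xs))" .
  qed
  also have "\<dots> = (\<Sum>xs\<in>SPl n. (if dd 0 xs = l then q ^ Phi 0 0 xs else 0) * qint q (2*l+1)
      + (if l = 0 then 0 else q^(2*l-1) * qint q (2*n+3-2*l) * (if dd 0 xs = l - 1 then q ^ Phi 0 0 xs else 0)))"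
  proof (rule sum.cong[OF refl])
    fix xs assume xs: "xs \<in> SPl n"
    note pr = SPl_props[OF xs]
    have K: "(\<Sum>j\<le>n. h (ins j N xs) + h (ins j (-N) xs))
       = (\<Sum>c<2 * dd 0 xs + 1. g (dd 0 xs) (Phi 0 0 xs + c))
     + (\<Sum>c<2 * length xs + 1 - 2 * dd 0 xs. g (Suc (dd 0 xs)) (Phi 0 0 xs + 2 * 0 + 2 * dd 0 xs + 1 + c))"
      using key[of 0 xs N g 0] pr unfolding N_def h_def g_def by simp
    have A: "(\<Sum>c<2 * dd 0 xs + 1. g (dd 0 xs) (Phi 0 0 xs + c)) = (if dd 0 xs = l then q ^ Phi 0 0 xs else 0) * qint q (2*l+1)"
      unfolding gsum by simp
    have B: "(\<Sum>c<2 * length xs + 1 - 2 * dd 0 xs. g (Suc (dd 0 xs)) (Phi 0 0 xs + 2 * 0 + 2 * dd 0 xs + 1 + c))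
       = (if l = 0 then 0 else q^(2*l-1) * qint q (2*n+3-2*l) * (if dd 0 xs = l - 1 then q ^ Phi 0 0 xs else 0))"
    proof (cases l)
      case 0 then show ?thesis by (simp add: g_def)
    next
      case (Suc l')
      have "(\<Sum>c<2 * length xs + 1 - 2 * dd 0 xs. g (Suc (dd 0 xs)) (Phi 0 0 xs + 2 * 0 + 2 * dd 0 xs + 1 + c))
         = (if dd 0 xs = l' then q ^ (Phi 0 0 xs + 2 * dd 0 xs + 1) * qint q (2 * n + 1 - 2 * dd 0 xs) else 0)"
        using pr(3) Suc gsum[where M="2 * length xs + 1 - 2 * dd 0 xs" and d="Suc (dd 0 xs)" and P="Phi 0 0 xs + 2 * dd 0 xs + 1"]
        by (simp add: add.assoc)
      also have "\<dots> = (if l = 0 then 0 else q^(2*l-1) * qint q (2*n+3-2*l) * (if dd 0 xs = l - 1 then q ^ Phi 0 0 xs else 0))"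
        using Suc by (simp add: power_add)
      finally show ?thesis .
    qed
    show "(\<Sum>j\<le>n. h (ins j N xs) + h (ins j (-N) xs)) = (if dd 0 xs = l then q ^ Phi 0 0 xs else 0) * qint q (2*l+1)
      + (if l = 0 then 0 else q^(2*l-1) * qint q (2*n+3-2*l) * (if dd 0 xs = l - 1 then q ^ Phi 0 0 xs else 0))"
      unfolding K A B ..
  qed
  also have "\<dots> = qint q (2*l+1) * Bnk q n l
   + (if l = 0 then 0 else q^(2*l-1) * qint q (2*n+3-2*l) * Bnk q n (l-1))"
    unfolding Bnk_list sum.distrib by (simp add: sum_distrib_left sum_distrib_right mult.commute)
  finally show ?thesis .
qed

theorem theorem1p1:
  fixes q :: real and n k :: nat
  assumes "q > 0" and "k \<le> n"
  shows "qint q 2 ^ k * qfact (q^2) k * SB q n k =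
    (\<Sum>l=0..k. q powi (int k * (int k - 2 * int l)) * Bnk q n l * qbinom (q^2) (n - l) (k - l))"
proof -
  have "qint q 2 ^ k * qfact (q^2) k * SB q n k =
    (\<Sum>l\<le>k. q powi (int k * (int k - 2 * int l)) * Bnk q n l * G (q^2) (n - l) (k - l))"
    by (rule main_alg[OF assms(1) Bnk_0 Bnk_Suc])
  also have "\<dots> = (\<Sum>l=0..k. q powi (int k * (int k - 2 * int l)) * Bnk q n l * qbinom (q^2) (n - l) (k - l))"
    unfolding atLeast0AtMost using assms(2) by (intro sum.cong) (auto simp: G_def)
  finally show ?thesis .
qed


end
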